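(* Let $f:\mathbb{R}^n\to(-\infty,+\infty]$ be proper, lower semicontinuous and prox-bounded with threshold $\lambda_f>0$, let $0<\lambda<\lambda_f$ and let $U\subseteq\mathbb{R}^n$ be a nonempty open convex set. Then $\partial_p^\lambda f(x)$ is a singleton for every $x\in U$ if and only if $h_\lambda f=f$ on $U$ and $f$ is differentiable on $U$. Consequently, $\partial_p^\lambda f(x)$ is a singleton for every $x\in\mathbb{R}^n$ if and only if $f+\lambda^{-1}j$ is convex and $f$ is differentiable on $\mathbb{R}^n$.
   Context: $j:=\frac12\|\cdot\|^2$. $e_\lambda f(x):=\inf_y\{f(y)+\frac1{2\lambda}\|y-x\|^2\}$; prox-bounded with threshold $\lambda_f=\sup\{\lambda>0:e_\lambda f(x)>-\infty\text{ for some }x\}$. $v\in\partial_p^\lambda f(x)$ iff $x\in\operatorname{dom}f$ and $f(y)\ge f(x)+\langle v,y-x\rangle-\frac1{2\lambda}\|y-x\|^2$ for all $y$. $h_\lambda f:=-e_\lambda(-e_\lambda f)$ is the $\lambda$-proximal hull; $f$ is called $\lambda$-proximal at a point if $h_\lambda f$ and $f$ agree there. *)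

theory Defs
  imports "HOL-Analysis.Analysis"
begin

text \<open>Extended-real valued functions f : R^n -> (-inf,+inf] are modelled as
  functions into ereal that never take the value -infinity.\<close>

definition proper_fun :: "('a \<Rightarrow> ereal) \<Rightarrow> bool" where
  "proper_fun f \<longleftrightarrow> (\<forall>x. f x \<noteq> -\<infinity>) \<and> (\<exists>x. f x \<noteq> \<infinity>)"

definition lsc_fun :: "('a::topological_space \<Rightarrow> ereal) \<Rightarrow> bool" where
  "lsc_fun f \<longleftrightarrow> (\<forall>x. f x \<le> Liminf (at x) f)"

definition moreau_env :: "real \<Rightarrow> ('a::real_normed_vector \<Rightarrow> ereal) \<Rightarrow> 'a \<Rightarrow> ereal" where
  "moreau_env lam f x = (INF y. f y + ereal ((norm (y - x))\<^sup>2 / (2 * lam)))"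

definition prox_bounded :: "('a::real_normed_vector \<Rightarrow> ereal) \<Rightarrow> bool" where
  "prox_bounded f \<longleftrightarrow> (\<exists>lam>0. \<exists>x. moreau_env lam f x > -\<infinity>)"

definition prox_threshold :: "('a::real_normed_vector \<Rightarrow> ereal) \<Rightarrow> ereal" where
  "prox_threshold f = Sup {ereal lam | lam. lam > 0 \<and> (\<exists>x. moreau_env lam f x > -\<infinity>)}"

definition prox_subdiff :: "real \<Rightarrow> ('a::real_inner \<Rightarrow> ereal) \<Rightarrow> 'a \<Rightarrow> 'a set" where
  "prox_subdiff lam f x = {v. f x \<noteq> \<infinity> \<and>
      (\<forall>y. f y \<ge> f x + ereal (inner v (y - x) - (norm (y - x))\<^sup>2 / (2 * lam)))}"

definition prox_hull :: "real \<Rightarrow> ('a::real_normed_vector \<Rightarrow> ereal) \<Rightarrow> 'a \<Rightarrow> ereal" where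
  "prox_hull lam f = (\<lambda>x. - moreau_env lam (\<lambda>z. - moreau_env lam f z) x)"

definition ereal_convex :: "('a::real_vector \<Rightarrow> ereal) \<Rightarrow> bool" where
  "ereal_convex g \<longleftrightarrow> (\<forall>x y t. 0 \<le> t \<and> t \<le> 1 \<longrightarrow>
      g ((1 - t) *\<^sub>R x + t *\<^sub>R y) \<le> ereal (1 - t) * g x + ereal t * g y)"

definition ereal_differentiable_on :: "('a::real_normed_vector \<Rightarrow> ereal) \<Rightarrow> 'a set \<Rightarrow> bool" where
  "ereal_differentiable_on f U \<longleftrightarrow> (\<forall>x\<in>U. \<bar>f x\<bar> \<noteq> \<infinity> \<and>
      (\<lambda>z. real_of_ereal (f z)) differentiable (at x))"

end

theory Submission
  imports Defs
begin

lemma grad_vec: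
  fixes L :: "'a::euclidean_space \<Rightarrow> real"
  assumes "linear L"
  shows "\<exists>a. L = (\<lambda>h. inner a h)"
proof
  let ?a = "\<Sum>b\<in>Basis. L b *\<^sub>R b"
  show "L = (\<lambda>h. inner ?a h)"
  proof
    fix h
    have "L h = L (\<Sum>b\<in>Basis. inner h b *\<^sub>R b)" by (simp add: euclidean_representation)
    also have "\<dots> = (\<Sum>b\<in>Basis. inner h b * L b)"
      using assms by (simp add: linear_sum linear_scale)
    also have "\<dots> = (\<Sum>b\<in>Basis. L b * inner b h)" by (simp add: inner_commute mult.commute)
    also have "\<dots> = inner ?a h" by (simp add: inner_sum_left)
    finally show "L h = inner ?a h" .
  qed
qed

lemma uniq_grad:
  fixes G :: "'a::real_inner \<Rightarrow> real"
  assumes "(G has_derivative G') (at x)" "open S" "x \<in> S"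
    and "\<forall>y\<in>S. G x + inner a (y - x) \<le> G y"
  shows "G' = (\<lambda>h. inner a h)"
proof -
  have d: "((\<lambda>y. G y - inner a y) has_derivative (\<lambda>h. G' h - inner a h)) (at x)"
    by (intro derivative_intros assms(1))
  have "\<forall>y\<in>S. G x - inner a x \<le> G y - inner a y"
    using assms(4) by (auto simp: inner_diff_right)
  then have "(\<lambda>h. G' h - inner a h) = (\<lambda>v. 0)"
    using differential_zero_maxmin[OF assms(3,2) d] by blast
  then show ?thesis by (metis (no_types) eq_iff_diff_eq_0)
qed

lemma exist_grad:
  fixes G :: "'a::real_normed_vector \<Rightarrow> real"
  assumes der: "(G has_derivative G') (at x)" and S: "open S" "x \<in> S"
    and seg: "\<And>t. 0 < t \<Longrightarrow> t < 1 \<Longrightarrow> x + t *\<^sub>R (y - x) \<in> S \<Longrightarrow>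
               G (x + t *\<^sub>R (y - x)) \<le> (1 - t) * G x + t * G y"
  shows "G x + G' (y - x) \<le> G y"
proof (rule ccontr)
  assume "\<not> ?thesis"
  then have pos: "0 < G' (y - x) - (G y - G x)" by simp
  have lin: "linear G'" using der has_derivative_linear by blast
  have d1: "((\<lambda>t. x + t *\<^sub>R (y - x)) has_derivative (\<lambda>t. t *\<^sub>R (y - x))) (at 0)"
    by (auto intro!: derivative_eq_intros)
  have d2: "(G has_derivative G') (at (x + 0 *\<^sub>R (y - x)))" using der by simp
  have "((\<lambda>t. G (x + t *\<^sub>R (y - x))) has_derivative (\<lambda>t. G' (t *\<^sub>R (y - x)))) (at 0)"
    using has_derivative_compose[OF d1 d2] by (simp add: o_def)
  moreover have "(\<lambda>t. G' (t *\<^sub>R (y - x))) = (*) (G' (y - x))"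
    using lin by (auto simp: linear_scale)
  ultimately have "((\<lambda>t. G (x + t *\<^sub>R (y - x))) has_real_derivative G' (y - x)) (at 0)"
    by (simp add: has_field_derivative_def mult.commute)
  then have "((\<lambda>t. G (x + t *\<^sub>R (y - x)) - t * (G y - G x)) has_real_derivative
      G' (y - x) - 1 * (G y - G x)) (at 0)"
    by (intro derivative_eq_intros) auto
  from DERIV_pos_inc_right[OF this] pos obtain d where d: "d > 0"
    and dd: "\<And>h. h > 0 \<Longrightarrow> h < d \<Longrightarrow>
       G (x + 0 *\<^sub>R (y - x)) - 0 * (G y - G x) < G (x + (0 + h) *\<^sub>R (y - x)) - (0 + h) * (G y - G x)"
    by auto
  obtain e where e: "e > 0" "ball x e \<subseteq> S" using S open_contains_ball by blast
  define h where "h = min (d/2) (min (e / (2 * (norm (y - x) + 1))) (1/2))"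
  have ep: "0 < e / (2 * (norm (y - x) + 1))" using e
    by (intro divide_pos_pos) (auto intro: add_nonneg_pos)
  then have hpos: "h > 0" using d e by (simp add: h_def)
  have hd: "h < d" "h < 1" using d by (auto simp: h_def)
  have "h * norm (y - x) \<le> e / (2 * (norm (y - x) + 1)) * (norm (y - x) + 1)"
    by (intro mult_mono) (use ep in \<open>auto simp: h_def e\<close>)
  also have "\<dots> = e / 2"
    using add_nonneg_pos[OF norm_ge_zero[of "y - x"] zero_less_one] by (simp add: field_simps)
  also have "\<dots> < e" using e by simp
  finally have "norm (h *\<^sub>R (y - x)) < e" using hpos by simp
  then have "x + h *\<^sub>R (y - x) \<in> S" using e by (auto simp: dist_norm)
  then have "G (x + h *\<^sub>R (y - x)) \<le> (1 - h) * G x + h * G y" using seg hpos hd by auto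
  moreover have "G x < G (x + h *\<^sub>R (y - x)) - h * (G y - G x)" using dd[OF hpos hd(1)] by simp
  ultimately show False by (simp add: algebra_simps)
qed

definition sgr :: "('a::real_inner \<Rightarrow> real) \<Rightarrow> 'a set \<Rightarrow> 'a \<Rightarrow> 'a \<Rightarrow> bool" where
  "sgr G D x w \<longleftrightarrow> x \<in> D \<and> (\<forall>y\<in>D. G x + inner w (y - x) \<le> G y)"

lemma convex_from_sgr:
  fixes G :: "'a::real_inner \<Rightarrow> real"
  assumes U: "convex U" and UD: "U \<subseteq> D"
    and a: "\<And>x. x \<in> U \<Longrightarrow> sgr G D x (a x)"
  shows "convex_on U G"
proof -
  have ineq: "G p + inner (a p) (q - p) \<le> G q" if "p \<in> U" "q \<in> D" for p q
    using a[OF that(1)] that by (auto simp: sgr_def)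
  show ?thesis
  proof (rule convex_onI[OF _ U])
    fix t :: real and p q assume t: "0 < t" "t < 1" and pq: "p \<in> U" "q \<in> U"
    define w where "w = (1 - t) *\<^sub>R p + t *\<^sub>R q"
    have w: "w \<in> U" using U pq t unfolding w_def by (simp add: convex_def)
    have 1: "G w + inner (a w) (p - w) \<le> G p" using ineq[OF w] pq UD by auto
    have 2: "G w + inner (a w) (q - w) \<le> G q" using ineq[OF w] pq UD by auto
    have "(1 - t) * inner (a w) (p - w) + t * inner (a w) (q - w) = inner (a w) ((1 - t) *\<^sub>R (p - w) + t *\<^sub>R (q - w))"
      by (simp add: inner_add_right)
    also have "(1 - t) *\<^sub>R (p - w) + t *\<^sub>R (q - w) = 0"
      unfolding w_def by (simp add: algebra_simps)
    finally have 3: "(1 - t) * inner (a w) (p - w) + t * inner (a w) (q - w) = 0" by simp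
    have "(1 - t) * (G w + inner (a w) (p - w)) + t * (G w + inner (a w) (q - w)) \<le> (1 - t) * G p + t * G q"
      using 1 2 t by (intro add_mono mult_left_mono) auto
    then show "G ((1 - t) *\<^sub>R p + t *\<^sub>R q) \<le> (1 - t) * G p + t * G q"
      using 3 unfolding w_def[symmetric] by (simp add: algebra_simps)
  qed
qed

lemma diff_from_unique:
  fixes G :: "'a::euclidean_space \<Rightarrow> real"
  assumes U: "open U" "convex U" and UD: "U \<subseteq> D"
    and a: "\<And>x. x \<in> U \<Longrightarrow> sgr G D x (a x)"
    and uniq: "\<And>x w. x \<in> U \<Longrightarrow> sgr G D x w \<Longrightarrow> w = a x"
    and x: "x \<in> U"
  shows "(G has_derivative (\<lambda>h. inner (a x) h)) (at x)"
proof -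
  have ineq: "G p + inner (a p) (q - p) \<le> G q" if "p \<in> U" "q \<in> D" for p q
    using a[OF that(1)] that by (auto simp: sgr_def)
  have cvx: "convex_on U G" using convex_from_sgr[OF U(2) UD a] by blast
  have cont: "continuous_on U G" by (rule convex_on_continuous[OF U(1) cvx])
  obtain r where r: "r > 0" "cball x (2 * r) \<subseteq> U"
  proof -
    obtain e where "e > 0" "cball x e \<subseteq> U" using U(1) x open_contains_cball by blast
    then show ?thesis by (intro that[of "e/2"]) auto
  qed
  have "compact (G ` cball x (2 * r))"
    by (rule compact_continuous_image[OF continuous_on_subset[OF cont r(2)]]) simp
  then obtain M where M: "M > 0" "\<And>z. z \<in> cball x (2 * r) \<Longrightarrow> \<bar>G z\<bar> \<le> M"
    using compact_imp_bounded bounded_pos by (metis image_eqI real_norm_def)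
  have bnd: "norm (a y) \<le> 2 * M / r" if y: "y \<in> ball x r" for y
  proof (cases "a y = 0")
    case True then show ?thesis using M r by simp
  next
    case False
    define z where "z = y + (r / norm (a y)) *\<^sub>R a y"
    have "dist x z \<le> dist x y + dist y z" by (rule dist_triangle)
    also have "dist y z = r" using False r by (simp add: z_def dist_norm)
    finally have "dist x z \<le> 2 * r" using y by simp
    then have zc: "z \<in> cball x (2 * r)" by simp
    have yc: "y \<in> cball x (2 * r)" using y r by simp
    have "G y + inner (a y) (z - y) \<le> G z" using ineq[of y z] zc yc r(2) UD by blast
    moreover have "inner (a y) (z - y) = r * norm (a y)"
      using False by (simp add: z_def power2_norm_eq_inner[symmetric] power2_eq_square)
    ultimately have "r * norm (a y) \<le> 2 * M" using M(2)[OF zc] M(2)[OF yc] by linarith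
    then show ?thesis using r by (simp add: field_simps)
  qed
  have acont: "\<exists>d>0. \<forall>y\<in>U. norm (y - x) < d \<longrightarrow> norm (a y - a x) < e" if e: "e > 0" for e
  proof (rule ccontr)
    assume "\<not> ?thesis"
    then have "\<forall>n::nat. \<exists>y\<in>U. norm (y - x) < min r (1 / Suc n) \<and> e \<le> norm (a y - a x)"
      by (metis linorder_not_le min_less_iff_conj of_nat_0_less_iff r(1) zero_less_Suc zero_less_divide_1_iff)
    then obtain ys where ys: "\<And>n. ys n \<in> U" "\<And>n. norm (ys n - x) < min r (1 / Suc n)"
        "\<And>n. e \<le> norm (a (ys n) - a x)"
      by metis
    have ylim: "ys \<longlonglongrightarrow> x"
    proof (rule LIMSEQ_I)
      fix k :: real assume "k > 0"
      then obtain N :: nat where N: "1 / k < N" using reals_Archimedean2 by blast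
      show "\<exists>N. \<forall>n\<ge>N. norm (ys n - x) < k"
      proof (intro exI allI impI)
        fix n assume "N \<le> n"
        then have "1 / k < Suc n" using N by linarith
        then have "1 / Suc n < k" using \<open>k > 0\<close> by (simp add: field_simps)
        then show "norm (ys n - x) < k" using ys(2)[of n] by linarith
      qed
    qed
    have "ys n \<in> ball x r" for n using ys(2)[of n] by (simp add: dist_norm norm_minus_commute)
    then have "bounded (range (a \<circ> ys))"
      unfolding bounded_iff using bnd by auto
    then obtain l \<sigma> where \<sigma>: "strict_mono \<sigma>" and llim: "((a \<circ> ys) \<circ> \<sigma>) \<longlonglongrightarrow> l"
      using bounded_imp_convergent_subsequence by blast
    have ylim2: "(ys \<circ> \<sigma>) \<longlonglongrightarrow> x" using LIMSEQ_subseq_LIMSEQ[OF ylim \<sigma>] .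
    have "sgr G D x l"
      unfolding sgr_def
    proof (intro conjI ballI)
      show "x \<in> D" using x UD by auto
      fix z assume z: "z \<in> D"
      have "((\<lambda>n. G x + inner (a x) (ys (\<sigma> n) - x) + inner (a (ys (\<sigma> n))) (z - ys (\<sigma> n)))
              \<longlongrightarrow> G x + inner (a x) (x - x) + inner l (z - x)) sequentially"
        using ylim2 llim by (intro tendsto_intros) (auto simp: o_def)
      moreover have "G x + inner (a x) (ys (\<sigma> n) - x) + inner (a (ys (\<sigma> n))) (z - ys (\<sigma> n)) \<le> G z" for n
      proof -
        have "G x + inner (a x) (ys (\<sigma> n) - x) \<le> G (ys (\<sigma> n))" using ineq[OF x, of "ys (\<sigma> n)"] ys(1) UD by auto
        moreover have "G (ys (\<sigma> n)) + inner (a (ys (\<sigma> n))) (z - ys (\<sigma> n)) \<le> G z" using ineq[OF ys(1) z] .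
        ultimately show ?thesis by linarith
      qed
      ultimately show "G x + inner l (z - x) \<le> G z"
        by (intro LIMSEQ_le_const2) auto
    qed
    then have "l = a x" using uniq x by blast
    moreover have "e \<le> norm (l - a x)"
    proof (rule LIMSEQ_le_const)
      show "(\<lambda>n. norm (((a \<circ> ys) \<circ> \<sigma>) n - a x)) \<longlonglongrightarrow> norm (l - a x)"
        using llim by (intro tendsto_intros)
      show "\<exists>N. \<forall>n\<ge>N. e \<le> norm (((a \<circ> ys) \<circ> \<sigma>) n - a x)" using ys(3) by auto
    qed
    ultimately show False using e by simp
  qed
  show ?thesis
    unfolding has_derivative_within_alt
  proof (intro conjI allI impI)
    show "bounded_linear (inner (a x))" by (rule bounded_linear_inner_right)
    fix e :: real assume e: "e > 0"
    obtain d where d: "d > 0" "\<forall>y\<in>U. norm (y - x) < d \<longrightarrow> norm (a y - a x) < e" using acont[OF e] by blast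
    show "\<exists>d>0. \<forall>y\<in>UNIV. norm (y - x) < d \<longrightarrow> norm (G y - G x - inner (a x) (y - x)) \<le> e * norm (y - x)"
    proof (intro exI[of _ "min d r"] conjI ballI impI)
      show "min d r > 0" using d r by simp
      fix y assume "norm (y - x) < min d r"
      then have yU: "y \<in> U" and yd: "norm (y - x) < d" using r
        by (auto simp: dist_norm norm_minus_commute)
      have lo: "0 \<le> G y - G x - inner (a x) (y - x)" using ineq[OF x, of y] yU UD by auto
      have "G y + inner (a y) (x - y) \<le> G x" using ineq[OF yU, of x] x UD by auto
      then have "G y - G x - inner (a x) (y - x) \<le> inner (a y - a x) (y - x)"
        by (simp add: inner_diff_left inner_diff_right algebra_simps)
      also have "\<dots> \<le> norm (a y - a x) * norm (y - x)" by (rule norm_cauchy_schwarz)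
      also have "\<dots> \<le> e * norm (y - x)"
        using d(2) yU yd by (intro mult_right_mono) auto
      finally show "norm (G y - G x - inner (a x) (y - x)) \<le> e * norm (y - x)" using lo by simp
    qed
  qed
qed

lemma sq_id:
  fixes y z :: "'a::real_inner"
  assumes "lam \<noteq> 0"
  shows "(norm (y - z))\<^sup>2 / (2 * lam) = (norm y)\<^sup>2 / (2 * lam) - inner y z / lam + (norm z)\<^sup>2 / (2 * lam)"
proof -
  have "(norm (y - z))\<^sup>2 = (norm y)\<^sup>2 - 2 * inner y z + (norm z)\<^sup>2"
    by (simp add: power2_norm_eq_inner inner_diff_left inner_diff_right inner_commute)
  then show ?thesis using assms by (simp add: field_simps)
qed

definition Gf :: "real \<Rightarrow> ('a::real_normed_vector \<Rightarrow> ereal) \<Rightarrow> 'a \<Rightarrow> real" where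
  "Gf lam f y = real_of_ereal (f y) + (norm y)\<^sup>2 / (2 * lam)"

definition Df :: "('a \<Rightarrow> ereal) \<Rightarrow> 'a set" where
  "Df f = {y. f y \<noteq> \<infinity>}"

lemma fin: "f y \<noteq> - \<infinity> \<Longrightarrow> f y \<noteq> \<infinity> \<Longrightarrow> f y = ereal (real_of_ereal (f y))"
  by (cases "f y") auto

lemma subdiff_char:
  fixes f :: "'a::real_inner \<Rightarrow> ereal"
  assumes nm: "\<forall>x. f x \<noteq> -\<infinity>" and lam: "lam > 0"
  shows "v \<in> prox_subdiff lam f x \<longleftrightarrow> sgr (Gf lam f) (Df f) x (v + (1/lam) *\<^sub>R x)"
proof -
  have key: "(real_of_ereal (f x) + (inner v (y - x) - (norm (y - x))\<^sup>2 / (2 * lam)) \<le> real_of_ereal (f y))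
      \<longleftrightarrow> (Gf lam f x + inner (v + (1/lam) *\<^sub>R x) (y - x) \<le> Gf lam f y)" for y
  proof -
    have "(norm (y - x))\<^sup>2 / (2 * lam) = (norm y)\<^sup>2 / (2 * lam) - inner y x / lam + (norm x)\<^sup>2 / (2 * lam)"
      using sq_id[of lam y x] lam by simp
    moreover have "inner x x / lam = 2 * ((norm x)\<^sup>2 / (2 * lam))"
      using lam by (simp add: power2_norm_eq_inner)
    moreover have "inner (v + (1/lam) *\<^sub>R x) (y - x) = inner v (y - x) + inner y x / lam - inner x x / lam"
      by (simp add: inner_add_left inner_diff_right inner_commute[of x y] diff_divide_distrib)
    ultimately show ?thesis unfolding Gf_def by linarith
  qed
  show ?thesis
  proof
    assume v: "v \<in> prox_subdiff lam f x"
    then have fx: "f x \<noteq> \<infinity>" by (simp add: prox_subdiff_def)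
    show "sgr (Gf lam f) (Df f) x (v + (1/lam) *\<^sub>R x)"
      unfolding sgr_def
    proof (intro conjI ballI)
      show "x \<in> Df f" using fx by (simp add: Df_def)
      fix y assume "y \<in> Df f"
      then have fy: "f y \<noteq> \<infinity>" by (simp add: Df_def)
      have "f x + ereal (inner v (y - x) - (norm (y - x))\<^sup>2 / (2 * lam)) \<le> f y"
        using v by (simp add: prox_subdiff_def)
      then have "real_of_ereal (f x) + (inner v (y - x) - (norm (y - x))\<^sup>2 / (2 * lam)) \<le> real_of_ereal (f y)"
        using fin[of f x] fin[of f y] nm fx fy by (metis ereal_less_eq(3) plus_ereal.simps(1))
      then show "Gf lam f x + inner (v + (1/lam) *\<^sub>R x) (y - x) \<le> Gf lam f y" using key by blast
    qed
  next
    assume s: "sgr (Gf lam f) (Df f) x (v + (1/lam) *\<^sub>R x)"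
    then have fx: "f x \<noteq> \<infinity>" by (simp add: sgr_def Df_def)
    show "v \<in> prox_subdiff lam f x"
      unfolding prox_subdiff_def
    proof (intro CollectI conjI allI)
      show "f x \<noteq> \<infinity>" by fact
      fix y
      show "f x + ereal (inner v (y - x) - (norm (y - x))\<^sup>2 / (2 * lam)) \<le> f y"
      proof (cases "f y = \<infinity>")
        case True then show ?thesis by simp
      next
        case False
        then have "y \<in> Df f" by (simp add: Df_def)
        then have "Gf lam f x + inner (v + (1/lam) *\<^sub>R x) (y - x) \<le> Gf lam f y" using s by (simp add: sgr_def)
        then have "real_of_ereal (f x) + (inner v (y - x) - (norm (y - x))\<^sup>2 / (2 * lam)) \<le> real_of_ereal (f y)"
          using key by blast
        then show ?thesis using fin[of f x] fin[of f y] nm fx False by (metis ereal_less_eq(3) plus_ereal.simps(1))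
      qed
    qed
  qed
qed

lemma ereal_aux1: "(a::ereal) \<le> b + ereal c \<Longrightarrow> - b \<le> - a + ereal c"
  by (cases a; cases b) auto

lemma hull_le:
  fixes f :: "'a::real_normed_vector \<Rightarrow> ereal"
  shows "prox_hull lam f x \<le> f x"
proof -
  have "- f x \<le> - moreau_env lam f z + ereal ((norm (z - x))\<^sup>2 / (2 * lam))" for z
  proof (rule ereal_aux1)
    show "moreau_env lam f z \<le> f x + ereal ((norm (z - x))\<^sup>2 / (2 * lam))"
      unfolding moreau_env_def by (rule INF_lower2[of x]) (auto simp: norm_minus_commute)
  qed
  then have "- f x \<le> moreau_env lam (\<lambda>z. - moreau_env lam f z) x"
    unfolding moreau_env_def[of lam "\<lambda>z. - moreau_env lam f z"] by (auto intro: INF_greatest)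
  then show ?thesis unfolding prox_hull_def by (simp add: ereal_uminus_le_reorder)
qed

lemma hull_ge:
  fixes f :: "'a::real_inner \<Rightarrow> ereal"
  assumes nm: "\<forall>x. f x \<noteq> -\<infinity>" and lam: "lam > 0" and s: "sgr (Gf lam f) (Df f) x w"
  shows "f x \<le> prox_hull lam f x"
proof -
  define z where "z = lam *\<^sub>R w"
  have fx: "f x = ereal (real_of_ereal (f x))" using s nm fin[of f x] by (auto simp: sgr_def Df_def)
  have iz: "inner u z / lam = inner u w" for u using lam by (simp add: z_def)
  have "ereal (real_of_ereal (f x) + (norm (x - z))\<^sup>2 / (2 * lam)) \<le> moreau_env lam f z"
    unfolding moreau_env_def
  proof (rule INF_greatest)
    fix y
    show "ereal (real_of_ereal (f x) + (norm (x - z))\<^sup>2 / (2 * lam)) \<le> f y + ereal ((norm (y - z))\<^sup>2 / (2 * lam))"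
    proof (cases "f y = \<infinity>")
      case True then show ?thesis by simp
    next
      case False
      then have fy: "f y = ereal (real_of_ereal (f y))" using nm fin[of f y] by auto
      have "Gf lam f x + inner w (y - x) \<le> Gf lam f y" using s False by (auto simp: sgr_def Df_def)
      moreover have "(norm (x - z))\<^sup>2 / (2 * lam) = (norm x)\<^sup>2 / (2 * lam) - inner x w + (norm z)\<^sup>2 / (2 * lam)"
        using sq_id[of lam x z] lam iz by simp
      moreover have "(norm (y - z))\<^sup>2 / (2 * lam) = (norm y)\<^sup>2 / (2 * lam) - inner y w + (norm z)\<^sup>2 / (2 * lam)"
        using sq_id[of lam y z] lam iz by simp
      moreover have "inner w (y - x) = inner y w - inner x w" by (simp add: inner_diff_right inner_commute)
      ultimately have "real_of_ereal (f x) + (norm (x - z))\<^sup>2 / (2 * lam) \<le> real_of_ereal (f y) + (norm (y - z))\<^sup>2 / (2 * lam)"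
        unfolding Gf_def by linarith
      then show ?thesis by (subst fy) simp
    qed
  qed
  then have "- moreau_env lam f z + ereal ((norm (z - x))\<^sup>2 / (2 * lam)) \<le> - f x"
    by (subst fx, cases "moreau_env lam f z") (auto simp: norm_minus_commute)
  then have "moreau_env lam (\<lambda>z. - moreau_env lam f z) x \<le> - f x"
    unfolding moreau_env_def[of lam "\<lambda>z. - moreau_env lam f z"] by (rule INF_lower2[OF UNIV_I])
  then show ?thesis unfolding prox_hull_def by (metis ereal_minus_le_minus ereal_uminus_uminus)
qed

lemma hull_seg:
  fixes f :: "'a::real_inner \<Rightarrow> ereal"
  assumes nm: "\<forall>x. f x \<noteq> -\<infinity>" and lam: "lam > 0"
    and xD: "x \<in> Df f" and yD: "y \<in> Df f" and t: "0 \<le> t" "t \<le> 1"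
    and hp: "prox_hull lam f ((1 - t) *\<^sub>R x + t *\<^sub>R y) = f ((1 - t) *\<^sub>R x + t *\<^sub>R y)"
    and pD: "(1 - t) *\<^sub>R x + t *\<^sub>R y \<in> Df f"
  shows "Gf lam f ((1 - t) *\<^sub>R x + t *\<^sub>R y) \<le> (1 - t) * Gf lam f x + t * Gf lam f y"
proof (rule field_le_epsilon)
  fix \<epsilon> :: real assume \<epsilon>: "\<epsilon> > 0"
  define p where "p = (1 - t) *\<^sub>R x + t *\<^sub>R y"
  define Fp where "Fp = real_of_ereal (f p)"
  define Fx where "Fx = real_of_ereal (f x)"
  define Fy where "Fy = real_of_ereal (f y)"
  have fp: "f p = ereal Fp" using pD nm fin[of f p] by (auto simp: Df_def Fp_def p_def)
  have fx: "f x = ereal Fx" using xD nm fin[of f x] by (auto simp: Df_def Fx_def)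
  have fy: "f y = ereal Fy" using yD nm fin[of f y] by (auto simp: Df_def Fy_def)
  have "moreau_env lam (\<lambda>z. - moreau_env lam f z) p = ereal (- Fp)"
    using hp fp unfolding prox_hull_def p_def[symmetric] by (metis ereal_uminus_uminus uminus_ereal.simps(1))
  then have "(INF z. - moreau_env lam f z + ereal ((norm (z - p))\<^sup>2 / (2 * lam))) < ereal (- Fp + \<epsilon>)"
    using \<epsilon> unfolding moreau_env_def[of lam "\<lambda>z. - moreau_env lam f z"] by simp
  then obtain z where z: "- moreau_env lam f z + ereal ((norm (z - p))\<^sup>2 / (2 * lam)) < ereal (- Fp + \<epsilon>)"
    by (auto simp: INF_less_iff)
  have Ex: "moreau_env lam f z \<le> ereal (Fx + (norm (x - z))\<^sup>2 / (2 * lam))"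
    unfolding moreau_env_def by (rule INF_lower2[of x]) (auto simp: fx)
  have Ey: "moreau_env lam f z \<le> ereal (Fy + (norm (y - z))\<^sup>2 / (2 * lam))"
    unfolding moreau_env_def by (rule INF_lower2[of y]) (auto simp: fy)
  obtain e where e: "moreau_env lam f z = ereal e"
    using z Ex by (cases "moreau_env lam f z") auto
  have A: "- e + (norm (z - p))\<^sup>2 / (2 * lam) < - Fp + \<epsilon>" using z e by simp
  have B: "e \<le> Fx + (norm (x - z))\<^sup>2 / (2 * lam)" using Ex e by simp
  have C: "e \<le> Fy + (norm (y - z))\<^sup>2 / (2 * lam)" using Ey e by simp
  define Q where "Q u = (norm u)\<^sup>2 / (2 * lam)" for u :: 'a
  have sq: "(norm (u - z))\<^sup>2 / (2 * lam) = Q u - inner u z / lam + Q z" for u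
    using sq_id[of lam u z] lam by (simp add: Q_def)
  have ip: "inner p z / lam = (1 - t) * (inner x z / lam) + t * (inner y z / lam)"
    by (simp add: p_def inner_add_left add_divide_distrib)
  have A': "Fp + Q p < e + inner p z / lam - Q z + \<epsilon>" using A sq[of p] by (simp add: norm_minus_commute)
  have B': "e + inner x z / lam - Q z \<le> Fx + Q x" using B sq[of x] by simp
  have C': "e + inner y z / lam - Q z \<le> Fy + Q y" using C sq[of y] by simp
  have B'': "(1 - t) * (e + inner x z / lam - Q z) \<le> (1 - t) * (Fx + Q x)"
    using B' t by (intro mult_left_mono) auto
  have C'': "t * (e + inner y z / lam - Q z) \<le> t * (Fy + Q y)"
    using C' t by (intro mult_left_mono) auto
  have sum: "(1 - t) * (e + inner x z / lam - Q z) + t * (e + inner y z / lam - Q z)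
      = e + ((1 - t) * (inner x z / lam) + t * (inner y z / lam)) - Q z"
    by (simp add: algebra_simps)
  have gp: "Gf lam f p = Fp + Q p" by (simp add: Gf_def Fp_def Q_def)
  have gx: "Gf lam f x = Fx + Q x" by (simp add: Gf_def Fx_def Q_def)
  have gy: "Gf lam f y = Fy + Q y" by (simp add: Gf_def Fy_def Q_def)
  have "Fp + Q p \<le> (1 - t) * (Fx + Q x) + t * (Fy + Q y) + \<epsilon>"
    using A' B'' C'' sum ip by linarith
  then show "Gf lam f ((1 - t) *\<^sub>R x + t *\<^sub>R y) \<le> (1 - t) * Gf lam f x + t * Gf lam f y + \<epsilon>"
    unfolding p_def[symmetric] gp gx gy .
qed

lemma sing_from_diff:
  fixes G :: "'a::euclidean_space \<Rightarrow> real"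
  assumes der: "(G has_derivative G') (at x)" and S: "open S" "x \<in> S" "S \<subseteq> D"
    and seg: "\<And>y t. y \<in> D \<Longrightarrow> 0 < t \<Longrightarrow> t < 1 \<Longrightarrow> x + t *\<^sub>R (y - x) \<in> S \<Longrightarrow>
               G (x + t *\<^sub>R (y - x)) \<le> (1 - t) * G x + t * G y"
  shows "\<exists>a. sgr G D x a \<and> (\<forall>w. sgr G D x w \<longrightarrow> w = a)"
proof -
  obtain a where a: "G' = (\<lambda>h. inner a h)"
    using grad_vec has_derivative_linear[OF der] by blast
  have "sgr G D x a"
    unfolding sgr_def
  proof (intro conjI ballI)
    show "x \<in> D" using S by auto
    fix y assume "y \<in> D"
    then show "G x + inner a (y - x) \<le> G y"
      using exist_grad[OF der S(1,2), of y] seg a by auto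
  qed
  moreover have "w = a" if w: "sgr G D x w" for w
  proof -
    have "G' = (\<lambda>h. inner w h)"
      using uniq_grad[OF der S(1,2)] w S(3) by (auto simp: sgr_def)
    then have "inner (w - a) (w - a) = 0" using a by (metis inner_diff_left right_minus_eq)
    then show ?thesis by simp
  qed
  ultimately show ?thesis by blast
qed

lemma sing_iff:
  fixes f :: "'a::real_inner \<Rightarrow> ereal"
  assumes nm: "\<forall>x. f x \<noteq> -\<infinity>" and lam: "lam > 0"
  shows "(\<exists>v. prox_subdiff lam f x = {v}) \<longleftrightarrow>
         (\<exists>a. sgr (Gf lam f) (Df f) x a \<and> (\<forall>w. sgr (Gf lam f) (Df f) x w \<longrightarrow> w = a))"
proof
  assume "\<exists>v. prox_subdiff lam f x = {v}"
  then obtain v where v: "prox_subdiff lam f x = {v}" by blast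
  show "\<exists>a. sgr (Gf lam f) (Df f) x a \<and> (\<forall>w. sgr (Gf lam f) (Df f) x w \<longrightarrow> w = a)"
  proof (intro exI conjI allI impI)
    show "sgr (Gf lam f) (Df f) x (v + (1/lam) *\<^sub>R x)" using subdiff_char[OF nm lam, of v x] v by simp
    fix w assume "sgr (Gf lam f) (Df f) x w"
    then have "w - (1/lam) *\<^sub>R x \<in> prox_subdiff lam f x" using subdiff_char[OF nm lam, of "w - (1/lam) *\<^sub>R x" x] by simp
    then show "w = v + (1/lam) *\<^sub>R x" using v by auto
  qed
next
  assume "\<exists>a. sgr (Gf lam f) (Df f) x a \<and> (\<forall>w. sgr (Gf lam f) (Df f) x w \<longrightarrow> w = a)"
  then obtain a where a: "sgr (Gf lam f) (Df f) x a" "\<And>w. sgr (Gf lam f) (Df f) x w \<Longrightarrow> w = a" by blast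
  have "prox_subdiff lam f x = {a - (1/lam) *\<^sub>R x}"
  proof (intro equalityI subsetI)
    fix v assume "v \<in> prox_subdiff lam f x"
    then have "sgr (Gf lam f) (Df f) x (v + (1/lam) *\<^sub>R x)" using subdiff_char[OF nm lam] by blast
    then have "v + (1/lam) *\<^sub>R x = a" using a(2) by blast
    then show "v \<in> {a - (1/lam) *\<^sub>R x}" by auto
  next
    fix v assume "v \<in> {a - (1/lam) *\<^sub>R x}"
    then show "v \<in> prox_subdiff lam f x" using subdiff_char[OF nm lam, of v x] a(1) by simp
  qed
  then show "\<exists>v. prox_subdiff lam f x = {v}" by blast
qed

lemma Q_diff: "(\<lambda>z::'a::real_inner. (norm z)\<^sup>2 / (2 * lam)) differentiable (at x)"
  unfolding power2_norm_eq_inner divide_inverse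
  by (intro differentiable_mult differentiable_inner) simp_all

lemma diff_iff:
  "(\<lambda>z. real_of_ereal (f z)) differentiable (at x) \<longleftrightarrow> Gf lam f differentiable (at (x::'a::real_inner))"
proof
  assume "(\<lambda>z. real_of_ereal (f z)) differentiable (at x)"
  then show "Gf lam f differentiable (at x)"
    unfolding Gf_def[abs_def] using Q_diff by (intro differentiable_add) auto
next
  assume "Gf lam f differentiable (at x)"
  then have "(\<lambda>z. Gf lam f z - (norm z)\<^sup>2 / (2 * lam)) differentiable (at x)"
    using Q_diff by (intro differentiable_diff) auto
  then show "(\<lambda>z. real_of_ereal (f z)) differentiable (at x)" by (simp add: Gf_def)
qed

theorem mainTheorem8:
  fixes f :: "'a::euclidean_space \<Rightarrow> ereal" and lam :: real
  assumes "proper_fun f" and "lsc_fun f" and "prox_bounded f"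
    and "prox_threshold f > 0"
    and "0 < lam" and "ereal lam < prox_threshold f"
  shows "(\<forall>U. open U \<and> convex U \<and> U \<noteq> {} \<longrightarrow>
            ((\<forall>x\<in>U. \<exists>v. prox_subdiff lam f x = {v}) \<longleftrightarrow>
             ((\<forall>x\<in>U. prox_hull lam f x = f x) \<and> ereal_differentiable_on f U)))
       \<and> ((\<forall>x. \<exists>v. prox_subdiff lam f x = {v}) \<longleftrightarrow>
             (ereal_convex (\<lambda>x. f x + ereal ((norm x)\<^sup>2 / (2 * lam)))
              \<and> ereal_differentiable_on f UNIV))"
proof -
  have nm: "\<forall>x. f x \<noteq> -\<infinity>" using assms(1) by (simp add: proper_fun_def)
  have lam: "lam > 0" by fact
  let ?G = "Gf lam f" and ?D = "Df f"
  have fG: "f x + ereal ((norm x)\<^sup>2 / (2 * lam)) = ereal (?G x)" if "x \<in> ?D" for x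
    using that nm fin[of f x] by (auto simp: Df_def Gf_def) (metis plus_ereal.simps(1))
  have P1: "((\<forall>x\<in>U. \<exists>v. prox_subdiff lam f x = {v}) \<longleftrightarrow>
             ((\<forall>x\<in>U. prox_hull lam f x = f x) \<and> ereal_differentiable_on f U))"
    if U: "open U" "convex U" for U
  proof
    assume "\<forall>x\<in>U. \<exists>v. prox_subdiff lam f x = {v}"
    then have "\<forall>x\<in>U. \<exists>a. sgr ?G ?D x a \<and> (\<forall>w. sgr ?G ?D x w \<longrightarrow> w = a)"
      using sing_iff[OF nm lam] by blast
    then obtain a where a: "\<And>x. x \<in> U \<Longrightarrow> sgr ?G ?D x (a x)"
      and au: "\<And>x w. x \<in> U \<Longrightarrow> sgr ?G ?D x w \<Longrightarrow> w = a x" by metis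
    have UD: "U \<subseteq> ?D" using a by (auto simp: sgr_def)
    show "(\<forall>x\<in>U. prox_hull lam f x = f x) \<and> ereal_differentiable_on f U"
    proof (intro conjI ballI)
      fix x assume "x \<in> U"
      then show "prox_hull lam f x = f x"
        using hull_le[of lam f x] hull_ge[OF nm lam a] by (simp add: antisym)
    next
      show "ereal_differentiable_on f U"
        unfolding ereal_differentiable_on_def
      proof (intro ballI conjI)
        fix x assume x: "x \<in> U"
        show "\<bar>f x\<bar> \<noteq> \<infinity>" using UD x nm by (auto simp: Df_def)
        have "?G differentiable (at x)"
          using diff_from_unique[OF U UD a au x] by (auto simp: differentiable_def)
        then show "(\<lambda>z. real_of_ereal (f z)) differentiable (at x)" using diff_iff by blast
      qed
    qed
  next
    assume h: "(\<forall>x\<in>U. prox_hull lam f x = f x) \<and> ereal_differentiable_on f U"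
    have UD: "U \<subseteq> ?D" using h nm by (auto simp: ereal_differentiable_on_def Df_def)
    show "\<forall>x\<in>U. \<exists>v. prox_subdiff lam f x = {v}"
    proof
      fix x assume x: "x \<in> U"
      have "?G differentiable (at x)" using h x diff_iff[of f x lam] by (auto simp: ereal_differentiable_on_def)
      then obtain G' where der: "(?G has_derivative G') (at x)" by (auto simp: differentiable_def)
      have "\<exists>a. sgr ?G ?D x a \<and> (\<forall>w. sgr ?G ?D x w \<longrightarrow> w = a)"
      proof (rule sing_from_diff[OF der U(1) x UD])
        fix y and t :: real assume y: "y \<in> ?D" and t: "0 < t" "t < 1" and p: "x + t *\<^sub>R (y - x) \<in> U"
        have pe: "x + t *\<^sub>R (y - x) = (1 - t) *\<^sub>R x + t *\<^sub>R y" by (simp add: algebra_simps)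
        show "?G (x + t *\<^sub>R (y - x)) \<le> (1 - t) * ?G x + t * ?G y"
          unfolding pe
          by (rule hull_seg[OF nm lam _ y]) (use x UD t p h pe in auto)
      qed
      then show "\<exists>v. prox_subdiff lam f x = {v}" using sing_iff[OF nm lam] by blast
    qed
  qed
  show ?thesis
  proof (intro conjI allI impI)
    fix U :: "'a set" assume "open U \<and> convex U \<and> U \<noteq> {}"
    then show "((\<forall>x\<in>U. \<exists>v. prox_subdiff lam f x = {v}) \<longleftrightarrow>
             ((\<forall>x\<in>U. prox_hull lam f x = f x) \<and> ereal_differentiable_on f U))"
      using P1 by blast
  next
    show "(\<forall>x. \<exists>v. prox_subdiff lam f x = {v}) \<longleftrightarrow>
             (ereal_convex (\<lambda>x. f x + ereal ((norm x)\<^sup>2 / (2 * lam))) \<and> ereal_differentiable_on f UNIV)"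
    proof
      assume all: "\<forall>x. \<exists>v. prox_subdiff lam f x = {v}"
      then have "\<forall>x. \<exists>a. sgr ?G ?D x a \<and> (\<forall>w. sgr ?G ?D x w \<longrightarrow> w = a)"
        using sing_iff[OF nm lam] by blast
      then obtain a where a: "\<And>x. sgr ?G ?D x (a x)" by metis
      have DU: "?D = UNIV" using a by (auto simp: sgr_def)
      have cv: "convex_on UNIV ?G" using convex_from_sgr[of UNIV ?D ?G a] a DU by auto
      show "ereal_convex (\<lambda>x. f x + ereal ((norm x)\<^sup>2 / (2 * lam))) \<and> ereal_differentiable_on f UNIV"
      proof
        show "ereal_convex (\<lambda>x. f x + ereal ((norm x)\<^sup>2 / (2 * lam)))"
          unfolding ereal_convex_def
        proof (intro allI impI)
          fix x y and t :: real assume t: "0 \<le> t \<and> t \<le> 1"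
          have "?G ((1 - t) *\<^sub>R x + t *\<^sub>R y) \<le> (1 - t) * ?G x + t * ?G y"
            using convex_onD[OF cv] t by auto
          then show "f ((1 - t) *\<^sub>R x + t *\<^sub>R y) + ereal ((norm ((1 - t) *\<^sub>R x + t *\<^sub>R y))\<^sup>2 / (2 * lam))
              \<le> ereal (1 - t) * (f x + ereal ((norm x)\<^sup>2 / (2 * lam))) + ereal t * (f y + ereal ((norm y)\<^sup>2 / (2 * lam)))"
            using fG DU by simp
        qed
        show "ereal_differentiable_on f UNIV" using P1[of UNIV] all by simp
      qed
    next
      assume c: "ereal_convex (\<lambda>x. f x + ereal ((norm x)\<^sup>2 / (2 * lam))) \<and> ereal_differentiable_on f UNIV"
      have "\<bar>f x\<bar> \<noteq> \<infinity>" for x using c by (simp add: ereal_differentiable_on_def)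
      then have "f x \<noteq> \<infinity>" for x by (metis abs_ereal.simps(3))
      then have DU: "?D = UNIV" unfolding Df_def by blast
      show "\<forall>x. \<exists>v. prox_subdiff lam f x = {v}"
      proof
        fix x
        have "?G differentiable (at x)" using c diff_iff[of f x lam] by (auto simp: ereal_differentiable_on_def)
        then obtain G' where der: "(?G has_derivative G') (at x)" by (auto simp: differentiable_def)
        have "\<exists>a. sgr ?G ?D x a \<and> (\<forall>w. sgr ?G ?D x w \<longrightarrow> w = a)"
        proof (rule sing_from_diff[OF der open_UNIV UNIV_I])
          show "UNIV \<subseteq> ?D" using DU by simp
          fix y and t :: real assume "y \<in> ?D" and t: "0 < t" "t < 1" and "x + t *\<^sub>R (y - x) \<in> UNIV"
          have pe: "x + t *\<^sub>R (y - x) = (1 - t) *\<^sub>R x + t *\<^sub>R y" by (simp add: algebra_simps)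
          have "ereal (?G ((1 - t) *\<^sub>R x + t *\<^sub>R y)) \<le> ereal (1 - t) * ereal (?G x) + ereal t * ereal (?G y)"
            using c t fG DU unfolding ereal_convex_def by (metis UNIV_I less_imp_le)
          then show "?G (x + t *\<^sub>R (y - x)) \<le> (1 - t) * ?G x + t * ?G y"
            unfolding pe by simp
        qed
        then show "\<exists>v. prox_subdiff lam f x = {v}" using sing_iff[OF nm lam] by blast
      qed
    qed
  qed
qed

end
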